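(* Let $G=(V,E)$ be a finite simple graph with $V=\{1,\dots,n\}$ and real vertex weights $w_1,\dots,w_n$, and let $d\ge 1$. Suppose $\psi, v_1,\dots,v_n\in\mathbb{C}^d$ are complex unit vectors with $\langle v_i|v_j\rangle=0$ whenever $\{i,j\}\in E$, forming a Lovász-optimum orthogonal representation, i.e. $\sum_{j\in V} w_j|\langle\psi|v_j\rangle|^2=\vartheta_c(G)$. Then there exist real unit vectors $\phi,\omega_1,\dots,\omega_n\in\mathbb{R}^{2d-1}$ with $\langle \omega_i|\omega_j\rangle=0$ whenever $\{i,j\}\in E$ and $$\sum_{j\in V} w_j\,\langle \phi|\omega_j\rangle^2=\sum_{j\in V} w_j\,|\langle \psi|v_j\rangle|^2 = \vartheta_c(G);$$ that is, a Lovász-optimum orthogonal representation can be realized in the $(2d-1)$-dimensional real Hilbert space.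
   Context: For the weighted graph $G$, $\vartheta_c(G)=\sup \sum_{j\in V} w_j\,|\langle \psi|v_j\rangle|^2$, where the supremum runs over all dimensions $m\ge1$ and all complex unit vectors $\psi,v_1,\dots,v_n\in\mathbb{C}^m$ such that $\langle v_i|v_j\rangle=0$ whenever $\{i,j\}\in E$. A Lovász-optimum orthogonal representation (LOOR) is a choice of unit vectors $\psi, v_1,\dots,v_n$ (real or complex) satisfying these orthogonality constraints and attaining this supremum. *)

theory Defs
  imports Complex_Main
begin

text \<open>Vectors in C^m (resp. R^m) are represented as functions nat => complex
  (resp. nat => real) vanishing at all indices k >= m.\<close>

definition cvecs :: "nat \<Rightarrow> (nat \<Rightarrow> complex) set" where
  "cvecs m = {v. \<forall>k\<ge>m. v k = 0}"

definition rvecs :: "nat \<Rightarrow> (nat \<Rightarrow> real) set" where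
  "rvecs m = {v. \<forall>k\<ge>m. v k = 0}"

definition cinner :: "nat \<Rightarrow> (nat \<Rightarrow> complex) \<Rightarrow> (nat \<Rightarrow> complex) \<Rightarrow> complex" where
  "cinner m a b = (\<Sum>k<m. cnj (a k) * b k)"

definition rinner :: "nat \<Rightarrow> (nat \<Rightarrow> real) \<Rightarrow> (nat \<Rightarrow> real) \<Rightarrow> real" where
  "rinner m a b = (\<Sum>k<m. a k * b k)"

definition simple_graph :: "nat \<Rightarrow> (nat \<Rightarrow> nat \<Rightarrow> bool) \<Rightarrow> bool" where
  "simple_graph n E \<longleftrightarrow> (\<forall>i j. E i j \<longrightarrow> i < n \<and> j < n \<and> E j i \<and> i \<noteq> j)"

definition c_orth_rep :: "nat \<Rightarrow> (nat \<Rightarrow> nat \<Rightarrow> bool) \<Rightarrow> nat \<Rightarrow>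
    (nat \<Rightarrow> complex) \<Rightarrow> (nat \<Rightarrow> nat \<Rightarrow> complex) \<Rightarrow> bool" where
  "c_orth_rep n E m psi v \<longleftrightarrow>
     psi \<in> cvecs m \<and> cinner m psi psi = 1 \<and>
     (\<forall>j<n. v j \<in> cvecs m \<and> cinner m (v j) (v j) = 1) \<and>
     (\<forall>i<n. \<forall>j<n. E i j \<longrightarrow> cinner m (v i) (v j) = 0)"

definition r_orth_rep :: "nat \<Rightarrow> (nat \<Rightarrow> nat \<Rightarrow> bool) \<Rightarrow> nat \<Rightarrow>
    (nat \<Rightarrow> real) \<Rightarrow> (nat \<Rightarrow> nat \<Rightarrow> real) \<Rightarrow> bool" where
  "r_orth_rep n E m phi u \<longleftrightarrow>
     phi \<in> rvecs m \<and> rinner m phi phi = 1 \<and>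
     (\<forall>j<n. u j \<in> rvecs m \<and> rinner m (u j) (u j) = 1) \<and>
     (\<forall>i<n. \<forall>j<n. E i j \<longrightarrow> rinner m (u i) (u j) = 0)"

definition theta_c :: "nat \<Rightarrow> (nat \<Rightarrow> nat \<Rightarrow> bool) \<Rightarrow> (nat \<Rightarrow> real) \<Rightarrow> real" where
  "theta_c n E w = Sup {(\<Sum>j<n. w j * (cmod (cinner m psi (v j)))\<^sup>2) | m psi v.
       m \<ge> 1 \<and> c_orth_rep n E m psi v}"

end

theory Submission
  imports Defs
begin

definition realify :: "nat \<Rightarrow> (nat \<Rightarrow> complex) \<Rightarrow> nat \<Rightarrow> real" where
  "realify d v k = (if k < 2*d then (if even k then Re (v (k div 2)) else Im (v (k div 2))) else 0)"

definition hh :: "nat \<Rightarrow> (nat \<Rightarrow> real) \<Rightarrow> (nat \<Rightarrow> real) \<Rightarrow> nat \<Rightarrow> real" where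
  "hh m a x = (\<lambda>k. x k - (2 * rinner m a x / rinner m a a) * a k)"

definition ph :: "complex \<Rightarrow> complex" where
  "ph z = (if z = 0 then 1 else cnj z / complex_of_real (cmod z))"

lemma sum_double: "(\<Sum>k<2*d. f k) = (\<Sum>k<d. f (2*k) + f (2*k+1))"
  for f :: "nat \<Rightarrow> 'a::comm_monoid_add"
  by (induction d) (simp_all add: add.assoc)

lemma rinner_realify: "rinner (2*d) (realify d a) (realify d b) = Re (cinner d a b)"
proof -
  have "rinner (2*d) (realify d a) (realify d b) =
     (\<Sum>k<d. realify d a (2*k) * realify d b (2*k) + realify d a (2*k+1) * realify d b (2*k+1))"
    by (simp add: rinner_def sum_double)
  also have "\<dots> = (\<Sum>k<d. Re (cnj (a k) * b k))"
    by (rule sum.cong) (auto simp: realify_def)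
  also have "\<dots> = Re (cinner d a b)" by (simp add: cinner_def)
  finally show ?thesis .
qed

lemma rinner_sym: "rinner m a b = rinner m b a"
  by (simp add: rinner_def mult.commute)

lemma rinner_diff_left: "rinner m (\<lambda>k. x k - y k) z = rinner m x z - rinner m y z"
  by (simp add: rinner_def sum_subtractf left_diff_distrib)

lemma rinner_diff_right: "rinner m z (\<lambda>k. x k - y k) = rinner m z x - rinner m z y"
  by (simp add: rinner_def sum_subtractf right_diff_distrib)

lemma rinner_scale_left: "rinner m (\<lambda>k. c * x k) z = c * rinner m x z"
  by (simp add: rinner_def sum_distrib_left algebra_simps)

lemma rinner_scale_right: "rinner m z (\<lambda>k. c * x k) = c * rinner m z x"
  by (simp add: rinner_def sum_distrib_left algebra_simps)

lemma hh_inner: "rinner m (hh m a x) (hh m a y) = rinner m x y"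
proof -
  define p where "p = rinner m a x"
  define q where "q = rinner m a y"
  define s where "s = rinner m a a"
  define c where "c = 2 * p / s"
  define c' where "c' = 2 * q / s"
  have hx: "hh m a x = (\<lambda>k. x k - (\<lambda>k. c * a k) k)" by (simp add: hh_def c_def p_def s_def)
  have hy: "hh m a y = (\<lambda>k. y k - (\<lambda>k. c' * a k) k)" by (simp add: hh_def c'_def q_def s_def)
  have "rinner m (hh m a x) (hh m a y) =
      rinner m x y - c' * rinner m x a - c * (rinner m a y - c' * s)"
    unfolding hx hy rinner_diff_left rinner_diff_right rinner_scale_left rinner_scale_right s_def
    by (simp add: algebra_simps)
  also have "\<dots> = rinner m x y - (2*q/s) * p - (2*p/s) * q + (2*p/s)*(2*q/s)*s"
    by (simp add: c_def c'_def q_def p_def rinner_sym[of m x a] algebra_simps)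
  also have "\<dots> = rinner m x y"
    by (cases "s = 0") (simp_all add: field_simps power2_eq_square)
  finally show ?thesis .
qed

lemma cinner_scale_left: "cinner m (\<lambda>k. c * x k) z = cnj c * cinner m x z"
  by (simp add: cinner_def sum_distrib_left algebra_simps)

lemma cinner_scale_right: "cinner m z (\<lambda>k. c * x k) = c * cinner m z x"
  by (simp add: cinner_def sum_distrib_left algebra_simps)

lemma cinner_swap: "cinner m b a = cnj (cinner m a b)"
  by (simp add: cinner_def mult.commute)

lemma ph_unit: "cnj (ph z) * ph z = 1"
proof (cases "z = 0")
  case False
  then have c: "cmod z \<noteq> 0" by simp
  have "cnj (ph z) * ph z = (z * cnj z) / complex_of_real ((cmod z)^2)"
    using False by (simp add: ph_def power2_eq_square)
  also have "\<dots> = 1" using c by (simp add: complex_norm_square[symmetric])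
  finally show ?thesis .
qed (simp add: ph_def)

lemma ph_mult: "ph z * z = complex_of_real (cmod z)"
proof (cases "z = 0")
  case False
  then have c: "cmod z \<noteq> 0" by simp
  have "ph z * z = (z * cnj z) / complex_of_real (cmod z)"
    using False by (simp add: ph_def mult.commute)
  also have "\<dots> = complex_of_real (cmod z)" using c
    by (simp add: complex_norm_square[symmetric] power2_eq_square)
  finally show ?thesis .
qed (simp add: ph_def)

lemma rinner_Suc: "rinner (Suc N) x y = rinner N x y + x N * y N"
  by (simp add: rinner_def)

lemma rinner_e: "N < m \<Longrightarrow> rinner m y (\<lambda>k. if k = N then 1 else 0) = y N"
  by (simp add: rinner_def if_distrib[where f="\<lambda>t. y _ * t"] cong: if_cong)

lemma rinner_cong: "(\<And>k. k < m \<Longrightarrow> x k = x' k) \<Longrightarrow> (\<And>k. k < m \<Longrightarrow> y k = y' k)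
   \<Longrightarrow> rinner m x y = rinner m x' y'"
  by (simp add: rinner_def)

theorem mainTheorem2:
  fixes n d :: nat and E :: "nat \<Rightarrow> nat \<Rightarrow> bool" and w :: "nat \<Rightarrow> real"
    and psi :: "nat \<Rightarrow> complex" and v :: "nat \<Rightarrow> nat \<Rightarrow> complex"
  assumes "simple_graph n E"
    and "d \<ge> 1"
    and "c_orth_rep n E d psi v"
    and "(\<Sum>j<n. w j * (cmod (cinner d psi (v j)))\<^sup>2) = theta_c n E w"
  shows "\<exists>phi u. r_orth_rep n E (2 * d - 1) phi u \<and>
    (\<Sum>j<n. w j * (rinner (2 * d - 1) phi (u j))\<^sup>2) = (\<Sum>j<n. w j * (cmod (cinner d psi (v j)))\<^sup>2) \<and>
    (\<Sum>j<n. w j * (cmod (cinner d psi (v j)))\<^sup>2) = theta_c n E w"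
proof -
  define m where "m = 2 * d"
  define N where "N = 2 * d - 1"
  have mN: "m = Suc N" using assms(2) by (simp add: m_def N_def)
  have NM: "N < m" using mN by simp
  let ?R = "realify d"
  define J where "J = ?R (\<lambda>k. \<i> * psi k)"
  define e where "e = (\<lambda>k. if k = N then 1 else 0 :: real)"
  define a where "a = (\<lambda>k. J k - e k)"
  define H where "H = hh m a"
  define z where "z j = cinner d psi (v j)" for j
  define vv where "vv j = (\<lambda>k. ph (z j) * v j k)" for j
  define phi where "phi = H (?R psi)"
  define u where "u j = H (?R (vv j))" for j
  have rep: "psi \<in> cvecs d" "cinner d psi psi = 1"
    "\<And>j. j < n \<Longrightarrow> v j \<in> cvecs d \<and> cinner d (v j) (v j) = 1"
    "\<And>i j. i < n \<Longrightarrow> j < n \<Longrightarrow> E i j \<Longrightarrow> cinner d (v i) (v j) = 0"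
    using assms(3) unfolding c_orth_rep_def by auto
  have F1: "rinner m (?R x) (?R y) = Re (cinner d x y)" for x y
    unfolding m_def by (rule rinner_realify)
  have F2: "rinner m (H x) (H y) = rinner m x y" for x y
    unfolding H_def by (rule hh_inner)
  have JJ: "rinner m J J = 1"
    unfolding J_def F1 cinner_scale_left cinner_scale_right using rep(2) by simp
  have ee: "rinner m e e = 1" unfolding e_def using rinner_e[OF NM] by simp
  have eJ: "rinner m e J = J N" using rinner_e[OF NM, of J] rinner_sym unfolding e_def by metis
  have aJ: "rinner m a J = 1 - J N"
    unfolding a_def rinner_diff_left JJ eJ by simp
  have aa: "rinner m a a = 2 - 2 * J N"
    unfolding a_def rinner_diff_left rinner_diff_right JJ ee eJ
    using rinner_sym[of m J e] eJ by simp
  have HJe: "H J k = e k" if k: "k < m" for k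
  proof (cases "rinner m a a = 0")
    case False
    then have "2 * rinner m a J / rinner m a a = 1" using aJ aa by (simp add: field_simps)
    then show ?thesis by (simp add: H_def hh_def a_def)
  next
    case True
    have "(\<Sum>k<m. a k * a k) = 0" using True by (simp add: rinner_def)
    then have "\<forall>k\<in>{..<m}. a k * a k = 0"
      by (subst (asm) sum_nonneg_eq_0_iff) auto
    then have "a k = 0" using k by auto
    then show ?thesis using True by (simp add: H_def hh_def a_def)
  qed
  have Rz: "?R x k = 0" if "k \<ge> m" for x k using that by (simp add: realify_def m_def)
  have ez: "e k = 0" if "k \<ge> m" for k using that NM by (simp add: e_def)
  have az: "a k = 0" if "k \<ge> m" for k using that Rz ez by (simp add: a_def J_def)
  have Hz: "H (?R x) k = 0" if "k \<ge> m" for x k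
    using that Rz az by (simp add: H_def hh_def)
  have HN: "H x N = 0" if "rinner m x J = 0" for x
  proof -
    have "H x N = rinner m (H x) e" using rinner_e[OF NM, of "H x"] by (simp add: e_def)
    also have "\<dots> = rinner m (H x) (H J)" by (rule rinner_cong) (simp_all add: HJe)
    also have "\<dots> = 0" using F2 that by simp
    finally show ?thesis .
  qed
  have inv: "H (?R x) \<in> rvecs N" if "Re (cinner d x (\<lambda>k. \<i> * psi k)) = 0" for x
  proof -
    have "H (?R x) N = 0" using HN[of "?R x"] that F1 by (simp add: J_def)
    moreover have "k \<ge> N \<Longrightarrow> k = N \<or> k \<ge> m" for k using mN by auto
    ultimately show ?thesis using Hz unfolding rvecs_def by blast
  qed
  have toN: "rinner N x y = rinner m x y" if "x \<in> rvecs N" for x y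
    using that unfolding mN rinner_Suc rvecs_def by simp
  have zc: "cinner d (v j) psi = cnj (z j)" for j using cinner_swap z_def by metis
  have orth_psi: "Re (cinner d psi (\<lambda>k. \<i> * psi k)) = 0"
    unfolding cinner_scale_right rep(2) by simp
  have orth_vv: "Re (cinner d (vv j) (\<lambda>k. \<i> * psi k)) = 0" for j
  proof -
    have "cinner d (vv j) (\<lambda>k. \<i> * psi k) = \<i> * cnj (ph (z j) * z j)"
      unfolding vv_def cinner_scale_left cinner_scale_right zc by simp
    also have "\<dots> = \<i> * complex_of_real (cmod (z j))" by (simp add: ph_mult)
    finally show ?thesis by simp
  qed
  have phiN: "phi \<in> rvecs N" unfolding phi_def by (rule inv[OF orth_psi])
  have uN: "u j \<in> rvecs N" for j unfolding u_def by (rule inv[OF orth_vv])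
  have vvin: "cinner d (vv i) (vv j) = cnj (ph (z i)) * ph (z j) * cinner d (v i) (v j)" for i j
    unfolding vv_def cinner_scale_left cinner_scale_right by simp
  have val: "rinner N phi (u j) = cmod (z j)" for j
  proof -
    have "rinner N phi (u j) = Re (cinner d psi (vv j))"
      using toN[OF phiN] F2 F1 by (simp add: phi_def u_def)
    also have "\<dots> = cmod (z j)"
      unfolding vv_def cinner_scale_right z_def[symmetric] ph_mult by simp
    finally show ?thesis .
  qed
  have R: "r_orth_rep n E N phi u"
    unfolding r_orth_rep_def
  proof (intro conjI allI impI)
    show "phi \<in> rvecs N" by (rule phiN)
    show "rinner N phi phi = 1" using toN[OF phiN] F2 F1 rep(2) by (simp add: phi_def)
  next
    fix j assume j: "j < n"
    show "u j \<in> rvecs N" by (rule uN)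
    show "rinner N (u j) (u j) = 1"
      using toN[OF uN] F2 F1 vvin[of j j] rep(3)[OF j] ph_unit by (simp add: u_def)
  next
    fix i j assume "i < n" "j < n" "E i j"
    then show "rinner N (u i) (u j) = 0"
      using toN[OF uN] F2 F1 vvin[of i j] rep(4) by (simp add: u_def)
  qed
  show ?thesis
    apply (rule exI[of _ phi], rule exI[of _ u])
    using R val assms(4) by (simp add: N_def z_def)
qed

end
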